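(* Consider the family of differential operators $T_\lambda=Q_2(z)\frac{d^2}{dz^2}+(Q_1(z)\lambda+P_1(z))\frac{d}{dz}+(\lambda^2+p\lambda+q)Q_0$ depending on $\lambda\in\mathbb C$, and assume it is of generic type. Then there exists a positive integer $N$ such that for every integer $n\ge N$ there are two values $\lambda_{1,n},\lambda_{2,n}$ of $\lambda$ for which $T_\lambda(y)=0$ has a polynomial solution of degree $n$, and $\lim_{n\to\infty}\lambda_{i,n}/n=\alpha_i$ ($i=1,2$), where $\alpha_1,\alpha_2$ are the roots of the characteristic polynomial $q_{22}+q_{11}t+q_{00}t^2$.
   Context: Here $Q_2$ is a polynomial of degree $2$, $Q_1,P_1$ are polynomials of degree at most $1$, $Q_0$ is a nonzero constant, $p,q\in\mathbb C$. Write $Q_i(z)=\sum_{j=0}^iq_{ji}z^j$ ($i=0,1,2$), with $q_{22}\ne0$, $q_{00}=Q_0\ne0$. The characteristic polynomial of $T_\lambda$ is $q_{22}+q_{11}t+q_{00}t^2$; the family is of generic type if its two roots have distinct arguments. *)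

theory Defs
  imports "HOL-Analysis.Analysis" "HOL-Computational_Algebra.Polynomial"
begin

definition T_op :: "complex poly \<Rightarrow> complex poly \<Rightarrow> complex poly \<Rightarrow> complex poly
    \<Rightarrow> complex \<Rightarrow> complex \<Rightarrow> complex \<Rightarrow> complex poly \<Rightarrow> complex poly" where
  "T_op Q2 Q1 P1 Q0 p q lam y =
     Q2 * pderiv (pderiv y) + (smult lam Q1 + P1) * pderiv y
     + smult (lam\<^sup>2 + p * lam + q) (Q0 * y)"

definition char_poly :: "complex poly \<Rightarrow> complex poly \<Rightarrow> complex poly \<Rightarrow> complex poly" where
  "char_poly Q2 Q1 Q0 = [:coeff Q2 2, coeff Q1 1, coeff Q0 0:]"

end

theory Submission
  imports Defs
begin


lemma coeff_quad_mult:
  "coeff ([:c0,c1,c2:] * w) i = c0 * coeff w i + (if i = 0 then 0 else c1 * coeff w (i-1))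
     + (if i \<le> 1 then 0 else c2 * coeff w (i-2))"
  by (cases i; cases "i - 1") (auto simp: coeff_pCons algebra_simps split: nat.splits)

lemma coeff_lin_mult:
  "coeff ([:c0,c1:] * w) i = c0 * coeff w i + (if i = 0 then 0 else c1 * coeff w (i-1))"
  by (cases i) (auto simp: coeff_pCons)

definition dco :: "complex \<Rightarrow> complex \<Rightarrow> complex \<Rightarrow> complex \<Rightarrow> complex \<Rightarrow> complex \<Rightarrow> complex \<Rightarrow> nat \<Rightarrow> complex" where
  "dco c2 e1 f1 g p q lam i = c2 * of_nat i * (of_nat i - 1) + (lam*e1+f1) * of_nat i + g*(lam^2+p*lam+q)"

lemma coeff_T:
  "coeff (T_op [:c0,c1,c2:] [:e0,e1:] [:f0,f1:] [:g:] p q lam z) i =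
     dco c2 e1 f1 g p q lam i * coeff z i
   + (c1 * of_nat i * of_nat (i+1) + (lam*e0+f0) * of_nat (i+1)) * coeff z (i+1)
   + c0 * of_nat (i+1) * of_nat (i+2) * coeff z (i+2)"
proof -
  have e: "smult lam [:e0, e1:] + [:f0, f1:] = [:lam*e0+f0, lam*e1+f1:]" by simp
  show ?thesis
    unfolding T_op_def e coeff_add coeff_smult coeff_quad_mult coeff_lin_mult dco_def
    by (cases i; cases "i - 1") (auto simp: coeff_pderiv algebra_simps)
qed


lemma T_add: "T_op Q2 Q1 P1 Q0 p q lam (y + z) = T_op Q2 Q1 P1 Q0 p q lam y + T_op Q2 Q1 P1 Q0 p q lam z"
  unfolding T_op_def by (simp add: pderiv_add algebra_simps smult_add_right)

lemma T_diff: "T_op Q2 Q1 P1 Q0 p q lam (y - z) = T_op Q2 Q1 P1 Q0 p q lam y - T_op Q2 Q1 P1 Q0 p q lam z"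
  unfolding T_op_def by (simp add: pderiv_diff algebra_simps smult_diff_right)

lemma T_high:
  assumes "\<forall>i\<ge>k. coeff z i = 0" "i \<ge> k"
  shows "coeff (T_op [:c0,c1,c2:] [:e0,e1:] [:f0,f1:] [:g:] p q lam z) i = 0"
  using assms by (simp add: coeff_T)

lemma T_top:
  assumes "\<forall>i>k. coeff z i = 0"
  shows "coeff (T_op [:c0,c1,c2:] [:e0,e1:] [:f0,f1:] [:g:] p q lam z) k = dco c2 e1 f1 g p q lam k * coeff z k"
  using assms by (simp add: coeff_T)

lemma T_surj:
  assumes "k \<le> n" "\<forall>j<n. dco c2 e1 f1 g p q lam j \<noteq> 0"
  shows "\<forall>r::complex poly. (\<forall>i\<ge>k. coeff r i = 0) \<longrightarrow>
     (\<exists>z. (\<forall>i\<ge>k. coeff z i = 0) \<and> T_op [:c0,c1,c2:] [:e0,e1:] [:f0,f1:] [:g:] p q lam z = r)"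
  using assms(1)
proof (induction k)
  case 0
  then show ?case
    by (auto intro!: exI[of _ 0] simp: poly_eq_iff T_op_def)
next
  case (Suc k)
  let ?L = "T_op [:c0,c1,c2:] [:e0,e1:] [:f0,f1:] [:g:] p q lam"
  let ?d = "dco c2 e1 f1 g p q lam k"
  have dk: "?d \<noteq> 0" using assms(2) Suc.prems by auto
  show ?case
  proof (intro allI impI)
    fix r :: "complex poly" assume r: "\<forall>i\<ge>Suc k. coeff r i = 0"
    define z0 where "z0 = monom (coeff r k / ?d) k"
    have z0c: "\<forall>i\<ge>Suc k. coeff z0 i = 0" by (simp add: z0_def coeff_monom)
    have Lz0: "coeff (?L z0) k = coeff r k"
      using T_top[of k z0] dk by (simp add: z0_def coeff_monom)
    have Lz0h: "\<forall>i\<ge>Suc k. coeff (?L z0) i = 0"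
      using T_high[OF z0c] by blast
    have "\<forall>i\<ge>k. coeff (r - ?L z0) i = 0"
    proof (intro allI impI)
      fix i assume "k \<le> i"
      then consider "i = k" | "i \<ge> Suc k" by linarith
      then show "coeff (r - ?L z0) i = 0"
        by cases (use Lz0 Lz0h r in auto)
    qed
    moreover have "k \<le> n" using Suc.prems by simp
    ultimately obtain z1 where z1: "\<forall>i\<ge>k. coeff z1 i = 0" "?L z1 = r - ?L z0"
      using Suc.IH by blast
    show "\<exists>z. (\<forall>i\<ge>Suc k. coeff z i = 0) \<and> ?L z = r"
      by (rule exI[of _ "z0 + z1"]) (use z0c z1 in \<open>auto simp: T_add\<close>)
  qed
qed

lemma T_exists:
  assumes "dco c2 e1 f1 g p q lam n = 0" "\<forall>j<n. dco c2 e1 f1 g p q lam j \<noteq> 0"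
  shows "\<exists>y. degree y = n \<and> T_op [:c0,c1,c2:] [:e0,e1:] [:f0,f1:] [:g:] p q lam y = 0"
proof -
  let ?L = "T_op [:c0,c1,c2:] [:e0,e1:] [:f0,f1:] [:g:] p q lam"
  have mc: "\<forall>i\<ge>Suc n. coeff (monom 1 n :: complex poly) i = 0" by (simp add: coeff_monom)
  have "\<forall>i\<ge>n. coeff (?L (monom 1 n)) i = 0"
  proof (intro allI impI)
    fix i assume "n \<le> i"
    then consider "i = n" | "i \<ge> Suc n" by linarith
    then show "coeff (?L (monom 1 n)) i = 0"
      by cases (use T_top[of n "monom 1 n"] T_high[OF mc] assms(1) in \<open>auto simp: coeff_monom\<close>)
  qed
  then obtain z where z: "\<forall>i\<ge>n. coeff z i = 0" "?L z = ?L (monom 1 n)"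
    using T_surj[OF order.refl assms(2)] by blast
  define y where "y = monom 1 n - z"
  have "degree y = n"
  proof (rule antisym)
    show "degree y \<le> n" unfolding y_def
      by (rule degree_le) (use z(1) in \<open>auto simp: coeff_monom\<close>)
    show "n \<le> degree y" unfolding y_def
      by (rule le_degree) (use z(1) in \<open>auto simp: coeff_monom\<close>)
  qed
  moreover have "?L y = 0" unfolding y_def T_diff z(2) by simp
  ultimately show ?thesis by blast
qed



lemma arg_ne:
  fixes a b :: complex and t :: real
  assumes "a \<noteq> 0" "Arg a \<noteq> Arg b" "0 \<le> t"
  shows "of_real t * b \<noteq> a"
proof
  assume h: "of_real t * b = a"
  show False
  proof (cases "t = 0")
    case True then show False using h assms by simp
  next
    case False then have "t > 0" using assms by simp
    then have "Arg (of_real t * b) = Arg b" by simp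
    then show False using h assms by simp
  qed
qed


lemma PPid:
  fixes nn kk Q a b p11 p q :: complex
  assumes "nn \<noteq> 0"
  shows "nn^2 * ((Q*a*b*(1+kk/nn-1/nn) + p11*(1/nn))^2 + (Q*p*(a+b)*(1/nn) - Q*(a+b)^2)*(Q*a*b*(1+kk/nn-1/nn) + p11*(1/nn))
     + Q*(a+b)^2*(Q*a*b*(1-1/nn) + p11*(1/nn) + Q*q*(1/nn)^2))
   = (Q*a*b*(nn+kk-1) + p11)^2 + (Q*p*(a+b) - Q*(a+b)^2*nn)*(Q*a*b*(nn+kk-1) + p11) + Q*(a+b)^2*(Q*a*b*nn*(nn-1) + p11*nn + Q*q)"
proof -
  have e1: "1+kk/nn-1/nn = (nn+kk-1)/nn" using assms by (simp add: field_simps)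
  have e2: "1 - 1/nn = (nn-1)/nn" using assms by (simp add: field_simps)
  show ?thesis unfolding e1 e2 using assms
    by (simp add: power2_eq_square field_simps)
qed

definition PP :: "complex \<Rightarrow> complex \<Rightarrow> complex \<Rightarrow> complex \<Rightarrow> complex \<Rightarrow> complex \<Rightarrow> real \<times> real \<Rightarrow> complex" where
  "PP Q a b p11 p q x = (let t = complex_of_real (fst x); h = complex_of_real (snd x) in
     (Q*a*b*(1+t-h) + p11*h)^2 + (Q*p*(a+b)*h - Q*(a+b)^2)*(Q*a*b*(1+t-h) + p11*h)
     + Q*(a+b)^2*(Q*a*b*(1-h) + p11*h + Q*q*h^2))"

lemma nondeg:
  fixes Q a b p11 p q :: complex
  assumes Q: "Q \<noteq> 0" and a: "a \<noteq> 0" and b: "b \<noteq> 0" and ab: "Arg a \<noteq> Arg b"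
  shows "\<exists>N. \<forall>n\<ge>N. \<forall>k<n. \<forall>lam. dco (Q*a*b) (-Q*(a+b)) p11 Q p q lam n = 0
             \<longrightarrow> dco (Q*a*b) (-Q*(a+b)) p11 Q p q lam k \<noteq> 0"
proof -
  let ?P = "PP Q a b p11 p q"
  have cont: "continuous_on UNIV ?P"
    unfolding PP_def Let_def by (intro continuous_intros)
  have P0: "?P (t, 0) = Q^2*a*b*(of_real t * b - a)*(of_real t * a - b)" for t
    unfolding PP_def Let_def by (simp add: algebra_simps power2_eq_square)
  have ne: "?P (t, 0) \<noteq> 0" if "t \<in> {0..1}" for t
    using that P0[of t] arg_ne[OF a ab, of t] arg_ne[OF b ab[symmetric], of t] Q a b by auto
  have "\<exists>t0\<in>{0..1::real}. \<forall>t\<in>{0..1}. norm (?P (t0,0)) \<le> norm (?P (t,0))"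
    by (rule continuous_attains_inf) (auto intro!: continuous_intros continuous_on_compose2[OF cont])
  then obtain t0 where t0: "t0 \<in> {0..1}" "\<forall>t\<in>{0..1}. norm (?P (t0,0)) \<le> norm (?P (t,0))" by blast
  define c where "c = norm (?P (t0,0))"
  have c: "c > 0" using ne[OF t0(1)] by (simp add: c_def)
  define S where "S = {0..1::real} \<times> {0..1::real}"
  have "uniformly_continuous_on S ?P"
    by (rule compact_uniformly_continuous) (auto simp: S_def intro: compact_Times continuous_on_subset[OF cont])
  then obtain \<delta> where \<delta>: "\<delta> > 0" "\<forall>x\<in>S. \<forall>x'\<in>S. dist x' x < \<delta> \<longrightarrow> dist (?P x') (?P x) < c"
    unfolding uniformly_continuous_on_def using c by metis
  define N where "N = nat \<lceil>1/\<delta>\<rceil> + 1"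
  show ?thesis
  proof (intro exI[of _ N] allI impI notI)
    fix n k lam
    assume n: "N \<le> n" and k: "k < n"
      and dn: "dco (Q*a*b) (-Q*(a+b)) p11 Q p q lam n = 0"
      and dk: "dco (Q*a*b) (-Q*(a+b)) p11 Q p q lam k = 0"
    have npos: "real n > 1/\<delta>" using n unfolding N_def by linarith
    hence n0: "real n > 0" using \<delta> by (smt (verit) divide_pos_pos)
    have h\<delta>: "1 / real n < \<delta>" using npos \<delta> n0 by (simp add: field_simps)
    define t where "t = real k / real n"
    define h where "h = 1 / real n"
    have tS: "(t, 0) \<in> S" "(t, h) \<in> S" using k n0 by (auto simp: S_def t_def h_def field_simps)
    have "dist (t,h) (t,0) < \<delta>" using h\<delta> n0 by (simp add: dist_prod_def h_def dist_real_def)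
    hence "dist (?P (t,h)) (?P (t,0)) < c" using \<delta>(2) tS by blast
    moreover have "c \<le> norm (?P (t,0))" using t0 tS by (auto simp: c_def S_def)
    ultimately have Pne: "?P (t,h) \<noteq> 0" by (auto simp: dist_norm)
    define nn where "nn = complex_of_nat n"
    define kk where "kk = complex_of_nat k"
    have nnz: "nn \<noteq> 0" "nn - kk \<noteq> 0" using k n0 by (auto simp: nn_def kk_def)
    have dn': "Q*a*b*nn*(nn-1) + (lam*(-Q*(a+b))+p11)*nn + Q*(lam^2+p*lam+q) = 0"
      using dn by (simp add: dco_def nn_def)
    have dk': "Q*a*b*kk*(kk-1) + (lam*(-Q*(a+b))+p11)*kk + Q*(lam^2+p*lam+q) = 0"
      using dk by (simp add: dco_def kk_def)
    have "(nn-kk) * (Q*a*b*(nn+kk-1) - Q*(a+b)*lam + p11) = 0"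
      using dn' dk' by algebra
    hence E2: "Q*a*b*(nn+kk-1) - Q*(a+b)*lam + p11 = 0" using nnz by simp
    define Y where "Y = Q*a*b*(nn+kk-1) + p11"
    have F: "Y^2 + (Q*p*(a+b) - Q*(a+b)^2*nn)*Y + Q*(a+b)^2*(Q*a*b*nn*(nn-1) + p11*nn + Q*q) = 0"
      using dn' E2 unfolding Y_def by algebra
    have "nn^2 * ?P (t,h) = Y^2 + (Q*p*(a+b) - Q*(a+b)^2*nn)*Y + Q*(a+b)^2*(Q*a*b*nn*(nn-1) + p11*nn + Q*q)"
    proof -
      have "complex_of_real t = kk/nn" "complex_of_real h = 1/nn"
        by (simp_all add: t_def h_def kk_def nn_def of_real_divide)
      then show ?thesis unfolding PP_def Let_def Y_def using PPid[OF nnz(1)] by simp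
    qed
    with F Pne nnz show False by simp
  qed
qed




lemma Did:
  fixes nn Q a b p11 p q :: complex
  assumes "nn \<noteq> 0"
  shows "(-Q*(a+b) + Q*p*(1/nn))^2 - 4*Q*(Q*a*b*(1 - 1/nn) + p11*(1/nn) + Q*q*(1/nn)^2)
     = ((-Q*(a+b)*nn + Q*p)^2 - 4*Q*(Q*a*b*nn*(nn - 1) + p11*nn + Q*q)) / nn^2"
  using assms by (simp add: field_simps power2_eq_square)

lemma sq_to_one:
  fixes u :: "nat \<Rightarrow> complex"
  assumes "(\<lambda>n. (u n)^2) \<longlonglongrightarrow> 1" "\<forall>n. Re (u n) \<ge> 0"
  shows "u \<longlonglongrightarrow> 1"
proof -
  have "(\<lambda>n. (u n)^2 - 1) \<longlonglongrightarrow> 0" using assms(1) by (simp add: LIM_zero)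
  then have z: "(\<lambda>n. norm ((u n)^2 - 1)) \<longlonglongrightarrow> 0" by (simp add: tendsto_norm_zero)
  have "norm (u n - 1) \<le> norm ((u n)^2 - 1)" for n
  proof -
    have "1 \<le> Re (u n + 1)" using assms(2) by simp
    also have "\<dots> \<le> norm (u n + 1)" by (rule complex_Re_le_cmod)
    finally have "norm (u n - 1) * 1 \<le> norm (u n - 1) * norm (u n + 1)"
      by (intro mult_left_mono) auto
    also have "\<dots> = norm ((u n)^2 - 1)"
      by (simp add: norm_mult[symmetric] power2_eq_square algebra_simps)
    finally show ?thesis by simp
  qed
  then have "(\<lambda>n. u n - 1) \<longlonglongrightarrow> 0"
    by (intro Lim_null_comparison[OF _ z]) auto
  then show ?thesis by (simp add: LIM_zero_iff)
qed

lemma roots_ex: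
  fixes Q a b p11 p q :: complex
  assumes Q: "Q \<noteq> 0" and ab: "a \<noteq> b"
  shows "\<exists>lam1 lam2 :: nat \<Rightarrow> complex.
     (\<forall>n. dco (Q*a*b) (-Q*(a+b)) p11 Q p q (lam1 n) n = 0) \<and>
     (\<forall>n. dco (Q*a*b) (-Q*(a+b)) p11 Q p q (lam2 n) n = 0) \<and>
     (\<lambda>n. lam1 n / of_nat n) \<longlonglongrightarrow> a \<and> (\<lambda>n. lam2 n / of_nat n) \<longlonglongrightarrow> b"
proof -
  define B where "B n = -Q*(a+b)* of_nat n + Q*p" for n :: nat
  define C where "C n = Q*a*b* of_nat n*(of_nat n - 1) + p11* of_nat n + Q*q" for n :: nat
  define D where "D n = (B n)^2 - 4*Q*C n" for n
  define w where "w = Q*(a-b)"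
  have w: "w \<noteq> 0" using Q ab by (simp add: w_def)
  define t where "t n = (if 0 \<le> Re (csqrt (D n) / w) then csqrt (D n) else - csqrt (D n))" for n
  have t2: "(t n)^2 = D n" for n by (simp add: t_def)
  have tw: "0 \<le> Re (t n / w)" for n
    by (auto simp: t_def)
  define lam1 where "lam1 n = (- B n + t n) / (2*Q)" for n
  define lam2 where "lam2 n = (- B n - t n) / (2*Q)" for n
  have dco_eq: "dco (Q*a*b) (-Q*(a+b)) p11 Q p q lam n = Q*lam^2 + B n * lam + C n" for lam n
    by (simp add: dco_def B_def C_def algebra_simps)
  have r1: "dco (Q*a*b) (-Q*(a+b)) p11 Q p q (lam1 n) n = 0" for n
  proof -
    have "4*Q*(Q*(lam1 n)^2 + B n * lam1 n + C n) = (t n)^2 - D n"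
      using Q by (simp add: lam1_def D_def field_simps power2_eq_square)
    then show ?thesis using Q t2[of n] unfolding dco_eq by simp
  qed
  have r2: "dco (Q*a*b) (-Q*(a+b)) p11 Q p q (lam2 n) n = 0" for n
  proof -
    have "4*Q*(Q*(lam2 n)^2 + B n * lam2 n + C n) = (t n)^2 - D n"
      using Q by (simp add: lam2_def D_def field_simps power2_eq_square)
    then show ?thesis using Q t2[of n] unfolding dco_eq by simp
  qed
  define u where "u n = t n / (of_nat n * w)" for n
  have inv: "(\<lambda>n. 1 / (of_nat n :: complex)) \<longlonglongrightarrow> 0"
    using lim_inverse_n[where 'a=complex] by (simp add: divide_inverse)
  have Bn: "(\<lambda>n. B n / of_nat n) \<longlonglongrightarrow> -Q*(a+b)"
  proof -
    have "(\<lambda>n. -Q*(a+b) + Q*p*(1/of_nat n)) \<longlonglongrightarrow> -Q*(a+b) + Q*p*0"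
      by (intro tendsto_intros inv)
    moreover have "\<forall>\<^sub>F n in sequentially. -Q*(a+b) + Q*p*(1/of_nat n) = B n / of_nat n"
      using eventually_gt_at_top[of 0] by eventually_elim (simp add: B_def field_simps)
    ultimately show ?thesis using Lim_transform_eventually by fastforce
  qed
  have Dn: "(\<lambda>n. D n / (of_nat n)^2) \<longlonglongrightarrow> w^2"
  proof -
    have "(\<lambda>n. (-Q*(a+b) + Q*p*(1/of_nat n))^2 - 4*Q*(Q*a*b*(1 - 1/of_nat n) + p11*(1/of_nat n) + Q*q*(1/of_nat n)^2))
       \<longlonglongrightarrow> (-Q*(a+b) + Q*p*0)^2 - 4*Q*(Q*a*b*(1 - 0) + p11*0 + Q*q*0^2)"
      by (intro tendsto_intros inv)
    moreover have "(-Q*(a+b) + Q*p*0)^2 - 4*Q*(Q*a*b*(1 - 0) + p11*0 + Q*q*0^2) = w^2"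
      by (simp add: w_def power2_eq_square algebra_simps)
    moreover have "\<forall>\<^sub>F n in sequentially. (-Q*(a+b) + Q*p*(1/of_nat n))^2 - 4*Q*(Q*a*b*(1 - 1/of_nat n) + p11*(1/of_nat n) + Q*q*(1/of_nat n)^2) = D n / (of_nat n)^2"
      using eventually_gt_at_top[of 0] by eventually_elim (use Did in \<open>simp add: D_def B_def C_def\<close>)
    ultimately show ?thesis using Lim_transform_eventually by fastforce
  qed
  have "(\<lambda>n. (u n)^2) \<longlonglongrightarrow> 1"
  proof -
    have "(\<lambda>n. D n / (of_nat n)^2 / w^2) \<longlonglongrightarrow> w^2 / w^2" by (intro tendsto_intros Dn) (use w in simp)
    moreover have "D n / (of_nat n)^2 / w^2 = (u n)^2" for n
      by (simp add: u_def t2 power_divide power_mult_distrib divide_divide_eq_left)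
    ultimately show ?thesis using w by simp
  qed
  moreover have "\<forall>n. Re (u n) \<ge> 0"
  proof
    fix n
    have "u n = (t n / w) / of_real (real n)" by (simp add: u_def)
    then have "Re (u n) = Re (t n / w) / real n" by (simp only: Re_divide_of_real)
    then show "Re (u n) \<ge> 0" using tw[of n] by simp
  qed
  ultimately have U: "u \<longlonglongrightarrow> 1" by (rule sq_to_one)
  have L1: "(\<lambda>n. (- (B n / of_nat n) + u n * w) / (2*Q)) \<longlonglongrightarrow> (- (-Q*(a+b)) + 1 * w) / (2*Q)"
    by (intro tendsto_intros Bn U) (use Q in simp)
  have L2: "(\<lambda>n. (- (B n / of_nat n) - u n * w) / (2*Q)) \<longlonglongrightarrow> (- (-Q*(a+b)) - 1 * w) / (2*Q)"
    by (intro tendsto_intros Bn U) (use Q in simp)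
  have "(- (-Q*(a+b)) + 1 * w) / (2*Q) = a" "(- (-Q*(a+b)) - 1 * w) / (2*Q) = b"
    using Q by (simp_all add: w_def field_simps)
  moreover have "\<forall>\<^sub>F n in sequentially. (- (B n / of_nat n) + u n * w) / (2*Q) = lam1 n / of_nat n"
    using eventually_gt_at_top[of 0] by eventually_elim (use w in \<open>simp add: u_def lam1_def field_simps\<close>)
  moreover have "\<forall>\<^sub>F n in sequentially. (- (B n / of_nat n) - u n * w) / (2*Q) = lam2 n / of_nat n"
    using eventually_gt_at_top[of 0] by eventually_elim (use w in \<open>simp add: u_def lam2_def field_simps\<close>)
  ultimately have "(\<lambda>n. lam1 n / of_nat n) \<longlonglongrightarrow> a" "(\<lambda>n. lam2 n / of_nat n) \<longlonglongrightarrow> b"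
    using L1 L2 Lim_transform_eventually by fastforce+
  then show ?thesis using r1 r2 by blast
qed



lemma poly_deg2: "degree (P::complex poly) \<le> 2 \<Longrightarrow> P = [:coeff P 0, coeff P 1, coeff P 2:]"
  by (auto simp: poly_eq_iff coeff_pCons coeff_eq_0 numeral_2_eq_2 split: nat.splits)

lemma poly_deg1: "degree (P::complex poly) \<le> 1 \<Longrightarrow> P = [:coeff P 0, coeff P 1:]"
  by (auto simp: poly_eq_iff coeff_pCons coeff_eq_0 split: nat.splits)

lemma poly_deg0: "degree (P::complex poly) = 0 \<Longrightarrow> P = [:coeff P 0:]"
  by (auto simp: poly_eq_iff coeff_pCons coeff_eq_0 split: nat.splits)

theorem lemma9:
  fixes Q2 Q1 P1 Q0 :: "complex poly" and p q \<alpha>1 \<alpha>2 :: complex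
  assumes "degree Q2 = 2" and "degree Q1 \<le> 1" and "degree P1 \<le> 1"
    and "degree Q0 = 0" and "Q0 \<noteq> 0"
    and roots: "char_poly Q2 Q1 Q0 = smult (coeff Q0 0) ([:-\<alpha>1, 1:] * [:-\<alpha>2, 1:])"
    and generic: "Arg \<alpha>1 \<noteq> Arg \<alpha>2"
  shows "\<exists>N::nat. N > 0 \<and> (\<exists>lam1 lam2 :: nat \<Rightarrow> complex.
           (\<forall>n\<ge>N. lam1 n \<noteq> lam2 n
              \<and> (\<exists>y. degree y = n \<and> T_op Q2 Q1 P1 Q0 p q (lam1 n) y = 0)
              \<and> (\<exists>y. degree y = n \<and> T_op Q2 Q1 P1 Q0 p q (lam2 n) y = 0))
         \<and> (\<lambda>n. lam1 n / of_nat n) \<longlonglongrightarrow> \<alpha>1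
         \<and> (\<lambda>n. lam2 n / of_nat n) \<longlonglongrightarrow> \<alpha>2)"
proof -
  define Q where "Q = coeff Q0 0"
  define a where "a = \<alpha>1"
  define b where "b = \<alpha>2"
  have Q0e: "Q0 = [:Q:]" using poly_deg0[OF assms(4)] by (simp add: Q_def)
  have Q: "Q \<noteq> 0" using assms(5) Q0e by auto
  have cp: "[:coeff Q2 2, coeff Q1 1, Q:] = [:Q*a*b, -Q*(a+b), Q:]"
    using roots by (simp add: char_poly_def Q_def a_def b_def algebra_simps)
  have q22: "coeff Q2 2 = Q*a*b" and q11: "coeff Q1 1 = -Q*(a+b)" using cp by simp_all
  have "Q2 \<noteq> 0" using assms(1) by auto
  hence "coeff Q2 (degree Q2) \<noteq> 0" by simp
  hence "coeff Q2 2 \<noteq> 0" using assms(1) by simp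
  hence a: "a \<noteq> 0" and b: "b \<noteq> 0" using q22 by auto
  have ab: "Arg a \<noteq> Arg b" using generic by (simp add: a_def b_def)
  hence anb: "a \<noteq> b" by auto
  define c0 where "c0 = coeff Q2 0"
  define c1 where "c1 = coeff Q2 1"
  define e0 where "e0 = coeff Q1 0"
  define f0 where "f0 = coeff P1 0"
  define p11 where "p11 = coeff P1 1"
  have Te: "T_op Q2 Q1 P1 Q0 p q = T_op [:c0, c1, Q*a*b:] [:e0, -Q*(a+b):] [:f0, p11:] [:Q:] p q"
    using poly_deg2[of Q2] poly_deg1[of Q1] poly_deg1[of P1] assms(1-3) Q0e q22 q11
    by (simp add: c0_def c1_def e0_def f0_def p11_def)
  obtain N0 where N0: "\<forall>n\<ge>N0. \<forall>k<n. \<forall>lam. dco (Q*a*b) (-Q*(a+b)) p11 Q p q lam n = 0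
             \<longrightarrow> dco (Q*a*b) (-Q*(a+b)) p11 Q p q lam k \<noteq> 0"
    using nondeg[OF Q a b ab] by blast
  obtain lam1 lam2 where L:
     "\<forall>n. dco (Q*a*b) (-Q*(a+b)) p11 Q p q (lam1 n) n = 0"
     "\<forall>n. dco (Q*a*b) (-Q*(a+b)) p11 Q p q (lam2 n) n = 0"
     "(\<lambda>n. lam1 n / of_nat n) \<longlonglongrightarrow> a" "(\<lambda>n. lam2 n / of_nat n) \<longlonglongrightarrow> b"
    using roots_ex[OF Q anb, of p11 p q] by blast
  have "(\<lambda>n. lam1 n / of_nat n - lam2 n / of_nat n) \<longlonglongrightarrow> a - b"
    by (intro tendsto_intros L)
  hence "\<forall>\<^sub>F n in sequentially. lam1 n / of_nat n - lam2 n / of_nat n \<noteq> 0"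
    using anb by (intro tendsto_imp_eventually_ne) auto
  then obtain N1 where N1: "\<forall>n\<ge>N1. lam1 n / of_nat n - lam2 n / of_nat n \<noteq> 0"
    unfolding eventually_sequentially by blast
  define N where "N = max (max N0 N1) 1"
  have main: "\<exists>y. degree y = n \<and> T_op Q2 Q1 P1 Q0 p q lam y = 0"
    if "n \<ge> N0" "dco (Q*a*b) (-Q*(a+b)) p11 Q p q lam n = 0" for n lam
  proof -
    have "\<forall>j<n. dco (Q*a*b) (-Q*(a+b)) p11 Q p q lam j \<noteq> 0" using that N0 by blast
    from T_exists[OF that(2) this, of c0 c1 e0 f0] show ?thesis unfolding Te .
  qed
  have A1: "N > 0" by (simp add: N_def)
  have A2: "(\<lambda>n. lam1 n / of_nat n) \<longlonglongrightarrow> \<alpha>1" "(\<lambda>n. lam2 n / of_nat n) \<longlonglongrightarrow> \<alpha>2"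
    using L by (simp_all add: a_def b_def)
  have A3: "\<forall>n\<ge>N. lam1 n \<noteq> lam2 n
              \<and> (\<exists>y. degree y = n \<and> T_op Q2 Q1 P1 Q0 p q (lam1 n) y = 0)
              \<and> (\<exists>y. degree y = n \<and> T_op Q2 Q1 P1 Q0 p q (lam2 n) y = 0)"
  proof (intro allI impI conjI)
    fix n assume n: "N \<le> n"
    show "lam1 n \<noteq> lam2 n" using N1 n by (auto simp: N_def)
    show "\<exists>y. degree y = n \<and> T_op Q2 Q1 P1 Q0 p q (lam1 n) y = 0"
      using main[of n "lam1 n"] L n by (auto simp: N_def)
    show "\<exists>y. degree y = n \<and> T_op Q2 Q1 P1 Q0 p q (lam2 n) y = 0"
      using main[of n "lam2 n"] L n by (auto simp: N_def)
  qed
  show ?thesis using A1 A2 A3 by blast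
qed


end
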